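(* Let $G$ be a compact group with identity $e$, let $A \subset G$ with $A = A^{-1}$ and $e \in A$, and let $\pi_0 = 1, \pi_1, \dots, \pi_m$ be pairwise distinct (non-isomorphic) irreducible unitary representations of $G$, realized as matrix-valued maps $\pi_i : G \to U(\dim \pi_i)$, with $\pi_0$ the trivial representation. Define \[ B_{\{1,\pi_1,\dots,\pi_m\}}(G,A) = \inf\Big\{ 1 + \sum_{i=1}^m \mathrm{tr}(\bm X_i) \;:\; \bm X_i \in \mathcal{S}^+_{\dim(\pi_i)} \text{ for } i \in [m],\; 1 + \sum_{i=1}^m \mathrm{tr}(\pi_i(g)\bm X_i^\top) \leq 0 \text{ for all } g \in A^c \Big\}, \] where $\mathcal{S}^+_\ell$ is the cone of $\ell \times \ell$ complex positive semidefinite matrices. If $\mu$ is a probability measure on $G$ with $\mathrm{supp}(\mu) \subseteq \overline{A^c}$ and $c > 0$ is such that $\widehat{\mu}(\pi_i) = \int \pi_i(g)\, d\mu(g) \succeq -c \bm I$ for all $i \in [m]$, then \[ B_{\{1,\pi_1,\dots,\pi_m\}}(G,A) \geq 1 + \frac{1}{c}. \]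
   Context: $A^c$ denotes the complement of $A$ in $G$ and $\overline{A^c}$ its closure; $\succeq$ is the positive semidefinite order; $[m] = \{1,\dots,m\}$. *)

theory Defs
  imports "HOL-Probability.Probability_Measure" "Jordan_Normal_Form.Schur_Decomposition"
begin

definition compact_group ::
  "('g::t2_space \<Rightarrow> 'g \<Rightarrow> 'g) \<Rightarrow> ('g \<Rightarrow> 'g) \<Rightarrow> 'g \<Rightarrow> bool" where
  "compact_group mul iv e \<longleftrightarrow>
     (\<forall>x y z. mul (mul x y) z = mul x (mul y z)) \<and>
     (\<forall>x. mul e x = x \<and> mul x e = x) \<and>
     (\<forall>x. mul (iv x) x = e \<and> mul x (iv x) = e) \<and>
     continuous_on UNIV (\<lambda>p::'g \<times> 'g. mul (fst p) (snd p)) \<and>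
     continuous_on UNIV iv \<and>
     compact (UNIV :: 'g set)"

definition mtrace :: "'a::comm_ring_1 mat \<Rightarrow> 'a" where
  "mtrace X = (\<Sum>i<dim_row X. X $$ (i, i))"

definition psd_mat :: "nat \<Rightarrow> complex mat \<Rightarrow> bool" where
  "psd_mat n X \<longleftrightarrow> X \<in> carrier_mat n n \<and> mat_adjoint X = X \<and>
     (\<forall>v \<in> carrier_vec n. 0 \<le> (X *\<^sub>v v) \<bullet>c v)"

definition unitary_mat :: "nat \<Rightarrow> complex mat \<Rightarrow> bool" where
  "unitary_mat n U \<longleftrightarrow> U \<in> carrier_mat n n \<and> U * mat_adjoint U = 1\<^sub>m n \<and> mat_adjoint U * U = 1\<^sub>m n"

definition unitary_rep ::
  "('g::topological_space \<Rightarrow> 'g \<Rightarrow> 'g) \<Rightarrow> nat \<Rightarrow> ('g \<Rightarrow> complex mat) \<Rightarrow> bool" where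
  "unitary_rep mul d \<rho> \<longleftrightarrow>
     (\<forall>g. unitary_mat d (\<rho> g)) \<and>
     (\<forall>g h. \<rho> (mul g h) = \<rho> g * \<rho> h) \<and>
     (\<forall>j<d. \<forall>k<d. continuous_on UNIV (\<lambda>g. \<rho> g $$ (j, k)))"

definition irreducible_rep :: "nat \<Rightarrow> ('g \<Rightarrow> complex mat) \<Rightarrow> bool" where
  "irreducible_rep d \<rho> \<longleftrightarrow> d > 0 \<and>
     (\<forall>W \<subseteq> carrier_vec d.
        (0\<^sub>v d \<in> W \<and> (\<forall>v\<in>W. \<forall>w\<in>W. v + w \<in> W) \<and> (\<forall>a. \<forall>v\<in>W. a \<cdot>\<^sub>v v \<in> W) \<and>
         (\<forall>g. \<forall>v\<in>W. \<rho> g *\<^sub>v v \<in> W))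
        \<longrightarrow> W = {0\<^sub>v d} \<or> W = carrier_vec d)"

definition iso_rep :: "nat \<Rightarrow> ('g \<Rightarrow> complex mat) \<Rightarrow> nat \<Rightarrow> ('g \<Rightarrow> complex mat) \<Rightarrow> bool" where
  "iso_rep d \<rho> d' \<rho>' \<longleftrightarrow> d = d' \<and>
     (\<exists>T \<in> carrier_mat d d. invertible_mat T \<and> (\<forall>g. T * \<rho> g = \<rho>' g * T))"

definition msupport :: "'g::topological_space measure \<Rightarrow> 'g set" where
  "msupport \<mu> = {x. \<forall>U. open U \<longrightarrow> x \<in> U \<longrightarrow> emeasure \<mu> U > 0}"

definition fourier_coeff :: "'g measure \<Rightarrow> nat \<Rightarrow> ('g \<Rightarrow> complex mat) \<Rightarrow> complex mat" where
  "fourier_coeff \<mu> d \<rho> = mat d d (\<lambda>(j, k). integral\<^sup>L \<mu> (\<lambda>g. \<rho> g $$ (j, k)))"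

text \<open>The bound B_{1,\<pi>_1..\<pi>_m}(G,A); infimum over an empty set is +\<infinity>.\<close>
definition B_bound ::
  "nat \<Rightarrow> (nat \<Rightarrow> nat) \<Rightarrow> (nat \<Rightarrow> 'g \<Rightarrow> complex mat) \<Rightarrow> 'g set \<Rightarrow> ereal" where
  "B_bound m d \<pi> A = (INF X \<in> {X :: nat \<Rightarrow> complex mat.
       (\<forall>i\<in>{1..m}. psd_mat (d i) (X i)) \<and>
       (\<forall>g \<in> - A. 1 + (\<Sum>i=1..m. mtrace (\<pi> i g * transpose_mat (X i))) \<le> 0)}.
     ereal (1 + (\<Sum>i=1..m. Re (mtrace (X i)))))"

end

theory Submission
  imports Defs
begin


definition qf :: "(nat \<Rightarrow> nat \<Rightarrow> complex) \<Rightarrow> nat \<Rightarrow> (nat \<Rightarrow> complex) \<Rightarrow> complex" where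
  "qf X n w = (\<Sum>j<n. \<Sum>k<n. X j k * w k * cnj (w j))"

definition psdf :: "nat \<Rightarrow> (nat \<Rightarrow> nat \<Rightarrow> complex) \<Rightarrow> bool" where
  "psdf n X \<longleftrightarrow> (\<forall>j<n. \<forall>k<n. X j k = cnj (X k j)) \<and> (\<forall>w. 0 \<le> qf X n w)"

lemma m1: "x * (if P then a else 0) = (if P then x * a else (0::complex))" by simp
lemma m2: "(if P then a else 0) * x = (if P then a * x else (0::complex))" by simp
lemma cnj_if0: "cnj (if P then a else 0) = (if P then cnj a else 0)" by simp
lemma s_if: "(\<Sum>k\<in>A. if P then f k else 0) = (if P then sum f A else (0::complex))" by simp
lemmas dsimps = s_if distrib_left distrib_right sum.distrib m1 m2 cnj_if0 complex_cnj_add sum.delta sum.delta' mult.assoc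

lemma psdf_diag: assumes "psdf n X" "r < n" shows "0 \<le> X r r"
proof -
  have "0 \<le> qf X n (\<lambda>i. if i = r then 1 else 0)" using assms unfolding psdf_def by blast
  also have "qf X n (\<lambda>i. if i = r then 1 else 0) = X r r"
    unfolding qf_def using assms(2) by (simp add: dsimps)
  finally show ?thesis .
qed

lemma psdf_zero_row: assumes X: "psdf n X" and r: "r < n" and z: "X r r = 0" and k: "k < n"
  shows "X r k = 0"
proof (rule ccontr)
  assume b: "X r k \<noteq> 0"
  have kr: "k \<noteq> r" using b z by auto
  define b2 where "b2 = (cmod (X r k))^2"
  have b2: "b2 > 0" using b by (simp add: b2_def)
  define t where "t = (Re (X k k) + 1) / (2 * b2)"
  define s where "s = - complex_of_real t * X r k"
  define w where "w = (\<lambda>i. (if i = r then s else 0) + (if i = k then 1 else 0))"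
  have herm: "X k r = cnj (X r k)" using X r k unfolding psdf_def by blast
  have "qf X n w = X r r * s * cnj s + X r k * cnj s + X k r * s + X k k"
    unfolding qf_def w_def using r k kr
    by (simp add: dsimps)
  also have "\<dots> = X k k - 2 * complex_of_real t * complex_of_real b2"
    unfolding s_def b2_def using z herm
    apply (simp add: algebra_simps) using complex_norm_square by (metis of_real_power)
  finally have e: "qf X n w = X k k - 2 * complex_of_real t * complex_of_real b2" .
  have "0 \<le> qf X n w" using X unfolding psdf_def by blast
  hence "0 \<le> Re (X k k) - 2 * t * b2" unfolding e by (simp add: less_eq_complex_def)
  moreover have "2 * t * b2 = Re (X k k) + 1" unfolding t_def using b2 by simp
  ultimately show False by simp
qed

lemma qf_upd: assumes "\<forall>k<n. Y r k = 0 \<and> Y k r = 0" shows "qf Y n (w(r:=s)) = qf Y n w"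
  unfolding qf_def using assms by (intro sum.cong refl) auto

lemma qf_rank1: "qf (\<lambda>j k. v j * cnj (v k)) n w = (\<Sum>k<n. cnj (v k) * w k) * cnj (\<Sum>k<n. cnj (v k) * w k)"
  unfolding qf_def cnj_sum sum_product by (subst sum.swap) (simp add: mult_ac)

lemma qf_diff: "qf (\<lambda>j k. X j k - Y j k) n w = qf X n w - qf Y n w"
  by (simp add: qf_def algebra_simps sum_subtractf)

lemma cnj_sq_nonneg: "0 \<le> z * cnj (z::complex)"
  by (simp add: less_eq_complex_def)

lemma sum_upd: fixes n r :: nat assumes "r < n"
  shows "(\<Sum>k<n. a k * (w(r:=x)) k) = (\<Sum>k<n. a k * w k) + a r * (x - (w r::complex))"
proof -
  have "\<And>k. a k * (w(r:=x)) k = a k * w k + (if k = r then a r * (x - w r) else 0)" by (auto simp: algebra_simps)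
  hence "(\<Sum>k<n. a k * (w(r:=x)) k) = (\<Sum>k<n. a k * w k + (if k = r then a r * (x - w r) else 0))" by simp
  also have "\<dots> = (\<Sum>k<n. a k * w k) + a r * (x - (w r::complex))" using assms by (simp add: sum.distrib)
  finally show ?thesis .
qed

lemma psd_pair_aux:
  assumes P: "psdf n P"
  shows "t + r = n \<Longrightarrow> psdf n X \<Longrightarrow> (\<forall>j<n. \<forall>k<n. (j < r \<or> k < r) \<longrightarrow> X j k = 0)
    \<Longrightarrow> 0 \<le> (\<Sum>j<n. \<Sum>k<n. P j k * X j k)"
proof (induction t arbitrary: r X)
  case 0
  then show ?case by simp
next
  case (Suc t)
  have r: "r < n" and tr: "t + Suc r = n" using Suc.prems by auto
  have X: "psdf n X" using Suc.prems by auto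
  have herm: "\<And>j k. j < n \<Longrightarrow> k < n \<Longrightarrow> X j k = cnj (X k j)" using X unfolding psdf_def by blast
  have z: "\<And>j k. j < n \<Longrightarrow> k < n \<Longrightarrow> j < r \<or> k < r \<Longrightarrow> X j k = 0" using Suc.prems by auto
  have a0: "0 \<le> X r r" using psdf_diag[OF X r] .
  show ?case
  proof (cases "X r r = 0")
    case True
    have "X r k = 0" if "k < n" for k using psdf_zero_row[OF X r True that] .
    moreover have "X k r = 0" if "k < n" for k using herm[OF that r] psdf_zero_row[OF X r True that] by simp
    ultimately have "\<forall>j<n. \<forall>k<n. (j < Suc r \<or> k < Suc r) \<longrightarrow> X j k = 0"
      using z by (metis less_Suc_eq)
    then show ?thesis using Suc.IH[OF tr X] by blast
  next
    case False
    define sa where "sa = sqrt (Re (X r r))"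
    have Im0: "Im (X r r) = 0" using a0 by (simp add: less_eq_complex_def)
    have Re0: "Re (X r r) > 0" using a0 False Im0 complex_eq_iff[of "X r r" 0] by (simp add: less_eq_complex_def)
    have sa: "sa > 0" unfolding sa_def using Re0 by simp
    have Xrr: "X r r = complex_of_real sa * complex_of_real sa"
      using Im0 Re0 unfolding sa_def by (simp add: complex_eq_iff)
    define v where "v = (\<lambda>j. X j r / complex_of_real sa)"
    define Y where "Y = (\<lambda>j k. X j k - v j * cnj (v k))"
    have vr: "v r = complex_of_real sa" unfolding v_def Xrr using sa by simp
    have split: "(\<Sum>j<n. \<Sum>k<n. P j k * X j k) = (\<Sum>j<n. \<Sum>k<n. P j k * Y j k) + qf P n (\<lambda>k. cnj (v k))"
      unfolding Y_def qf_def by (simp add: algebra_simps sum.distrib sum_subtractf)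
    have q1: "0 \<le> qf P n (\<lambda>k. cnj (v k))" using P unfolding psdf_def by blast
    have Yrk: "Y r k = 0" if "k < n" for k
    proof -
      have "v r * cnj (v k) = X r k" unfolding vr v_def using herm[OF that r] sa by (simp add: Xrr)
      thus ?thesis unfolding Y_def by simp
    qed
    have Ykr: "Y k r = 0" if "k < n" for k
    proof -
      have "v k * cnj (v r) = X k r" unfolding vr v_def using sa by (simp add: Xrr)
      thus ?thesis unfolding Y_def by simp
    qed
    have Yz: "\<forall>j<n. \<forall>k<n. (j < Suc r \<or> k < Suc r) \<longrightarrow> Y j k = 0"
    proof (intro allI impI)
      fix j k assume jk: "j < n" "k < n" and "j < Suc r \<or> k < Suc r"
      then consider "j = r" | "k = r" | "j < r" | "k < r" by linarith
      then show "Y j k = 0"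
      proof cases
        case 1 then show ?thesis using Yrk jk by simp
      next
        case 2 then show ?thesis using Ykr jk by simp
      next
        case 3
        have "v j = 0" unfolding v_def using z[OF jk(1) r] 3 by simp
        then show ?thesis unfolding Y_def using z[OF jk] 3 by simp
      next
        case 4
        have "v k = 0" unfolding v_def using z[OF jk(2) r] 4 by simp
        then show ?thesis unfolding Y_def using z[OF jk] 4 by simp
      qed
    qed
    have Yh: "\<forall>j<n. \<forall>k<n. Y j k = cnj (Y k j)"
    proof (intro allI impI)
      fix j k assume "j < n" "k < n"
      then have "X j k = cnj (X k j)" by (rule herm)
      thus "Y j k = cnj (Y k j)" unfolding Y_def by simp
    qed
    have Yq: "0 \<le> qf Y n w" for w
    proof -
      define zz where "zz = (\<lambda>w. \<Sum>k<n. cnj (v k) * w k)"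
      define w' where "w' = w(r := w r - zz w / cnj (v r))"
      have "zz w' = zz w + cnj (v r) * (w' r - w r)"
        unfolding zz_def w'_def using sum_upd[OF r, of "\<lambda>k. cnj (v k)" w] by simp
      also have "\<dots> = 0" unfolding w'_def using vr sa by simp
      finally have zw: "zz w' = 0" .
      have "qf Y n w = qf Y n w'" unfolding w'_def using Yrk Ykr qf_upd[of n Y r w] by simp
      also have "\<dots> = qf X n w' - zz w' * cnj (zz w')"
        unfolding Y_def qf_diff qf_rank1 zz_def ..
      also have "\<dots> = qf X n w'" using zw by simp
      finally show ?thesis using X unfolding psdf_def by simp
    qed
    have "psdf n Y" unfolding psdf_def using Yh Yq by blast
    from Suc.IH[OF tr this Yz] have "0 \<le> (\<Sum>j<n. \<Sum>k<n. P j k * Y j k)" .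
    then show ?thesis unfolding split using q1 by simp
  qed
qed

lemma psd_pair: "psdf n P \<Longrightarrow> psdf n X \<Longrightarrow> 0 \<le> (\<Sum>j<n. \<Sum>k<n. P j k * X j k)"
  using psd_pair_aux[of n P n 0 X] by simp



lemma psd_mat_psdf: assumes "psd_mat n X" shows "psdf n (\<lambda>j k. X $$ (j,k))"
proof -
  have X: "X \<in> carrier_mat n n" and adj: "mat_adjoint X = X"
    and q: "\<And>v. v \<in> carrier_vec n \<Longrightarrow> 0 \<le> (X *\<^sub>v v) \<bullet>c v"
    using assms unfolding psd_mat_def by auto
  have herm: "X $$ (j,k) = cnj (X $$ (k,j))" if "j < n" "k < n" for j k
  proof -
    have "X $$ (j,k) = mat_adjoint X $$ (j,k)" using adj by simp
    also have "\<dots> = cnj (X $$ (k,j))" unfolding mat_adjoint_def using X that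
      by (simp add: mat_of_rows_index)
    finally show ?thesis .
  qed
  have "0 \<le> qf (\<lambda>j k. X $$ (j,k)) n w" for w
  proof -
    have "(X *\<^sub>v vec n w) \<bullet>c vec n w = qf (\<lambda>j k. X $$ (j,k)) n w"
      unfolding qf_def using X
      by (simp add: scalar_prod_def sum_distrib_right lessThan_atLeast0 mult.assoc)
    thus ?thesis using q[of "vec n w"] by simp
  qed
  thus ?thesis unfolding psdf_def using herm by blast
qed

lemma mtrace_mult_transpose:
  assumes "A \<in> carrier_mat n n" "B \<in> carrier_mat n n"
  shows "mtrace (A * transpose_mat B) = (\<Sum>j<n. \<Sum>k<n. A $$ (j,k) * B $$ (j,k))"
  unfolding mtrace_def using assms
  by (simp add: scalar_prod_def lessThan_atLeast0)

lemma cont_integrable: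
  fixes h :: "'g::topological_space \<Rightarrow> complex"
  assumes cpt: "compact (UNIV :: 'g set)" and h: "continuous_on UNIV h"
    and fm: "finite_measure \<mu>" and sb: "sets \<mu> = sets borel"
  shows "integrable \<mu> h"
proof -
  have "compact (range h)" using compact_continuous_image[OF h cpt] .
  then obtain B where B: "\<And>x. norm (h x) \<le> B"
    using compact_imp_bounded[of "range h"] unfolding bounded_iff by blast
  have m: "h \<in> borel_measurable \<mu>"
    by (subst measurable_cong_sets[OF sb refl]) (rule borel_measurable_continuous_onI[OF h])
  show ?thesis by (rule finite_measure.integrable_const_bound[OF fm _ m, of B]) (simp add: B)
qed

lemma AE_nonpos_support:
  fixes F :: "'g::topological_space \<Rightarrow> real"
  assumes cpt: "compact (UNIV :: 'g set)" and F: "continuous_on UNIV F"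
    and sb: "sets \<mu> = sets borel" and S: "\<forall>x\<in>msupport \<mu>. F x \<le> 0"
  shows "AE x in \<mu>. F x \<le> 0"
proof -
  define K where "K = (\<lambda>n::nat. {x. 1 / real (Suc n) \<le> F x})"
  have Kn: "K n \<in> null_sets \<mu>" for n
  proof -
    have cl: "closed (K n)" unfolding K_def by (rule closed_Collect_le) (auto intro: F continuous_on_const)
    hence cK: "compact (K n)" using compact_Int_closed[OF cpt cl] by simp
    define C where "C = {U. open U \<and> emeasure \<mu> U = 0}"
    have cov: "K n \<subseteq> \<Union>C"
    proof
      fix x assume "x \<in> K n"
      hence "F x > 0" unfolding K_def by (smt (verit) divide_pos_pos of_nat_0_less_iff zero_less_Suc mem_Collect_eq)
      hence "x \<notin> msupport \<mu>" using S by force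
      then obtain U where "open U" "x \<in> U" "\<not> emeasure \<mu> U > 0" unfolding msupport_def by blast
      thus "x \<in> \<Union>C" unfolding C_def by (auto simp: not_gr_zero)
    qed
    obtain C' where C': "C' \<subseteq> C" "finite C'" "K n \<subseteq> \<Union>C'"
      using compactE[OF cK cov] C_def by blast
    have "\<And>U. U \<in> C' \<Longrightarrow> U \<in> null_sets \<mu>"
      using C' unfolding C_def null_sets_def using sb by auto
    hence "\<Union>((\<lambda>U. U) ` C') \<in> null_sets \<mu>" by (rule null_sets.finite_UN[OF C'(2)])
    moreover have "K n \<in> sets \<mu>" using sb cl by simp
    ultimately show ?thesis using null_sets_subset C'(3) by simp
  qed
  have "\<Union>(range K) \<in> null_sets \<mu>" using null_sets_UN Kn by blast
  moreover have "{x \<in> space \<mu>. \<not> F x \<le> 0} \<subseteq> \<Union>(range K)"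
  proof
    fix x assume "x \<in> {x \<in> space \<mu>. \<not> F x \<le> 0}"
    hence "F x > 0" by simp
    then obtain n where "n > 0" "inverse (real n) < F x" using ex_inverse_of_nat_less by blast
    hence "1 / real (Suc n) \<le> F x"
      by (smt (verit) frac_le inverse_eq_divide of_nat_0_less_iff of_nat_le_iff le_SucI order_refl zero_less_Suc)
    thus "x \<in> \<Union>(range K)" unfolding K_def by blast
  qed
  ultimately show ?thesis by (rule AE_I')
qed



theorem lemma2p5:
  fixes mul :: "'g::t2_space \<Rightarrow> 'g \<Rightarrow> 'g" and iv :: "'g \<Rightarrow> 'g" and e :: 'g
    and A :: "'g set" and m :: nat and d :: "nat \<Rightarrow> nat"
    and \<pi> :: "nat \<Rightarrow> 'g \<Rightarrow> complex mat" and \<mu> :: "'g measure" and c :: real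
  assumes G: "compact_group mul iv e"
    and A_sym: "iv ` A = A" and e_in: "e \<in> A"
    and reps: "\<forall>i\<in>{0..m}. unitary_rep mul (d i) (\<pi> i) \<and> irreducible_rep (d i) (\<pi> i)"
    and distinct: "\<forall>i\<in>{0..m}. \<forall>j\<in>{0..m}. i \<noteq> j \<longrightarrow> \<not> iso_rep (d i) (\<pi> i) (d j) (\<pi> j)"
    and triv: "d 0 = 1" "\<forall>g. \<pi> 0 g = 1\<^sub>m 1"
    and prob: "prob_space \<mu>" and borel: "sets \<mu> = sets borel"
    and supp: "msupport \<mu> \<subseteq> closure (- A)"
    and c_pos: "c > 0"
    and coeff: "\<forall>i\<in>{1..m}. psd_mat (d i) (fourier_coeff \<mu> (d i) (\<pi> i) + complex_of_real c \<cdot>\<^sub>m 1\<^sub>m (d i))"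
  shows "B_bound m d \<pi> A \<ge> ereal (1 + 1 / c)"
proof -
  have cpt: "compact (UNIV :: 'g set)" using G unfolding compact_group_def by blast
  have fm: "finite_measure \<mu>" using prob unfolding prob_space_def by blast
  have car: "\<pi> i g \<in> carrier_mat (d i) (d i)" if "i \<in> {1..m}" for i g
    using reps that unfolding unitary_rep_def unitary_mat_def by auto
  have cont: "continuous_on UNIV (\<lambda>g. \<pi> i g $$ (j, k))" if "i \<in> {1..m}" "j < d i" "k < d i" for i j k
    using reps that unfolding unitary_rep_def by auto
  have intg: "integrable \<mu> (\<lambda>g. \<pi> i g $$ (j, k))" if "i \<in> {1..m}" "j < d i" "k < d i" for i j k
    by (rule cont_integrable[OF cpt cont[OF that] fm borel])
  define M where "M = (\<lambda>i j k. integral\<^sup>L \<mu> (\<lambda>g. \<pi> i g $$ (j, k)))"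
  show ?thesis unfolding B_bound_def
  proof (rule INF_greatest)
    fix X assume "X \<in> {X :: nat \<Rightarrow> complex mat.
       (\<forall>i\<in>{1..m}. psd_mat (d i) (X i)) \<and>
       (\<forall>g \<in> - A. 1 + (\<Sum>i=1..m. mtrace (\<pi> i g * transpose_mat (X i))) \<le> 0)}"
    hence psdX: "\<And>i. i \<in> {1..m} \<Longrightarrow> psd_mat (d i) (X i)"
      and feas: "\<And>g. g \<in> - A \<Longrightarrow> 1 + (\<Sum>i=1..m. mtrace (\<pi> i g * transpose_mat (X i))) \<le> 0"
      by auto
    have carX: "X i \<in> carrier_mat (d i) (d i)" if "i \<in> {1..m}" for i
      using psdX[OF that] unfolding psd_mat_def by blast
    define f where "f = (\<lambda>g. 1 + (\<Sum>i=1..m. \<Sum>j<d i. \<Sum>k<d i. \<pi> i g $$ (j, k) * X i $$ (j, k)))"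
    have f_eq: "f g = 1 + (\<Sum>i=1..m. mtrace (\<pi> i g * transpose_mat (X i)))" for g
      unfolding f_def using mtrace_mult_transpose[OF car carX] by simp
    have fc: "continuous_on UNIV f"
      unfolding f_def
      by (intro continuous_intros cont) auto
    define F where "F = (\<lambda>g. Re (f g))"
    have Fc: "continuous_on UNIV F" unfolding F_def using continuous_on_Re[OF fc] .
    have "-A \<subseteq> {g. F g \<le> 0}" using feas unfolding F_def f_eq by (auto simp: less_eq_complex_def)
    moreover have "closed {g. F g \<le> 0}" by (rule closed_Collect_le[OF Fc continuous_on_const])
    ultimately have "closure (-A) \<subseteq> {g. F g \<le> 0}" by (rule closure_minimal)
    hence "\<forall>x\<in>msupport \<mu>. F x \<le> 0" using supp by blast
    hence AE: "AE x in \<mu>. F x \<le> 0" using AE_nonpos_support[OF cpt Fc borel] by blast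
    have "0 \<le> integral\<^sup>L \<mu> (\<lambda>x. - F x)" by (rule integral_nonneg_AE) (use AE in auto)
    hence IF: "integral\<^sup>L \<mu> F \<le> 0" by simp
    have fint: "integrable \<mu> f" by (rule cont_integrable[OF cpt fc fm borel])
    have "integral\<^sup>L \<mu> F = Re (integral\<^sup>L \<mu> f)" unfolding F_def by (rule integral_Re[OF fint])
    also have "integral\<^sup>L \<mu> f = 1 + (\<Sum>i=1..m. \<Sum>j<d i. \<Sum>k<d i. M i j k * X i $$ (j, k))"
    proof -
      have "integral\<^sup>L \<mu> f = integral\<^sup>L \<mu> (\<lambda>g. 1) + integral\<^sup>L \<mu> (\<lambda>g. (\<Sum>i=1..m. \<Sum>j<d i. \<Sum>k<d i. \<pi> i g $$ (j, k) * X i $$ (j, k)))"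
        unfolding f_def
      proof (subst Bochner_Integration.integral_add)
        show "integrable \<mu> (\<lambda>g. (\<Sum>i=1..m. \<Sum>j<d i. \<Sum>k<d i. \<pi> i g $$ (j, k) * X i $$ (j, k)))"
          by (rule cont_integrable[OF cpt _ fm borel]) (intro continuous_intros cont; auto)
      qed (auto intro!: cont_integrable[OF cpt continuous_on_const fm borel])
      also have "integral\<^sup>L \<mu> (\<lambda>g. 1::complex) = 1"
        using prob by (simp add: prob_space.prob_space)
      also have "integral\<^sup>L \<mu> (\<lambda>g. (\<Sum>i=1..m. \<Sum>j<d i. \<Sum>k<d i. \<pi> i g $$ (j, k) * X i $$ (j, k)))
          = (\<Sum>i=1..m. \<Sum>j<d i. \<Sum>k<d i. M i j k * X i $$ (j, k))"
      proof -
        have T: "integrable \<mu> (\<lambda>g. \<Sum>j<d i. \<Sum>k<d i. \<pi> i g $$ (j,k) * X i $$ (j,k))"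
          if "i \<in> {1..m}" for i
          by (rule cont_integrable[OF cpt _ fm borel]) (intro continuous_intros cont[OF that]; auto)
        have T2: "integrable \<mu> (\<lambda>g. \<Sum>k<d i. \<pi> i g $$ (j,k) * X i $$ (j,k))"
          if "i \<in> {1..m}" "j < d i" for i j
          by (rule cont_integrable[OF cpt _ fm borel]) (intro continuous_intros cont[OF that(1)]; use that in auto)
        have T3: "integrable \<mu> (\<lambda>g. \<pi> i g $$ (j,k) * X i $$ (j,k))"
          if "i \<in> {1..m}" "j < d i" "k < d i" for i j k
          by (rule cont_integrable[OF cpt _ fm borel]) (intro continuous_intros cont[OF that])
        have ie: "integral\<^sup>L \<mu> (\<lambda>g. \<Sum>j<d i. \<Sum>k<d i. \<pi> i g $$ (j,k) * X i $$ (j,k))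
              = (\<Sum>j<d i. \<Sum>k<d i. M i j k * X i $$ (j, k))" if i: "i \<in> {1..m}" for i
        proof -
          have "integral\<^sup>L \<mu> (\<lambda>g. \<Sum>j<d i. \<Sum>k<d i. \<pi> i g $$ (j,k) * X i $$ (j,k))
              = (\<Sum>j<d i. integral\<^sup>L \<mu> (\<lambda>g. \<Sum>k<d i. \<pi> i g $$ (j,k) * X i $$ (j,k)))"
            by (rule Bochner_Integration.integral_sum) (use T2[OF i] in auto)
          also have "\<dots> = (\<Sum>j<d i. \<Sum>k<d i. integral\<^sup>L \<mu> (\<lambda>g. \<pi> i g $$ (j,k) * X i $$ (j,k)))"
            by (rule sum.cong[OF refl], rule Bochner_Integration.integral_sum) (use T3[OF i] in auto)
          also have "\<dots> = (\<Sum>j<d i. \<Sum>k<d i. M i j k * X i $$ (j, k))"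
            unfolding M_def by (simp add: integral_mult_left_zero)
          finally show ?thesis .
        qed
        have "integral\<^sup>L \<mu> (\<lambda>g. (\<Sum>i=1..m. \<Sum>j<d i. \<Sum>k<d i. \<pi> i g $$ (j, k) * X i $$ (j, k)))
           = (\<Sum>i=1..m. integral\<^sup>L \<mu> (\<lambda>g. \<Sum>j<d i. \<Sum>k<d i. \<pi> i g $$ (j,k) * X i $$ (j,k)))"
          by (rule Bochner_Integration.integral_sum) (use T in auto)
        also have "\<dots> = (\<Sum>i=1..m. \<Sum>j<d i. \<Sum>k<d i. M i j k * X i $$ (j, k))"
          by (rule sum.cong[OF refl]) (rule ie)
        finally show ?thesis .
      qed
      finally show ?thesis .
    qed
    finally have IF2: "Re (1 + (\<Sum>i=1..m. \<Sum>j<d i. \<Sum>k<d i. M i j k * X i $$ (j, k))) \<le> 0" using IF by simp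
    have bnd: "Re (\<Sum>j<d i. \<Sum>k<d i. M i j k * X i $$ (j, k)) \<ge> - c * Re (mtrace (X i))"
      if i: "i \<in> {1..m}" for i
    proof -
      define Q where "Q = fourier_coeff \<mu> (d i) (\<pi> i) + complex_of_real c \<cdot>\<^sub>m 1\<^sub>m (d i)"
      have Qe: "Q $$ (j,k) = M i j k + (if j = k then complex_of_real c else 0)" if "j < d i" "k < d i" for j k
        unfolding Q_def fourier_coeff_def M_def using that by simp
      have "0 \<le> (\<Sum>j<d i. \<Sum>k<d i. Q $$ (j,k) * X i $$ (j, k))"
        by (rule psd_pair[OF psd_mat_psdf psd_mat_psdf]) (use coeff i psdX[OF i] Q_def in auto)
      also have "(\<Sum>j<d i. \<Sum>k<d i. Q $$ (j,k) * X i $$ (j, k))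
         = (\<Sum>j<d i. \<Sum>k<d i. M i j k * X i $$ (j, k)) + complex_of_real c * mtrace (X i)"
        using carX[OF i]
        by (simp add: Qe distrib_right sum.distrib mtrace_def sum_distrib_left if_distrib[of "\<lambda>x. x * _"] sum.delta cong: if_cong)
      finally have "0 \<le> Re ((\<Sum>j<d i. \<Sum>k<d i. M i j k * X i $$ (j, k)) + complex_of_real c * mtrace (X i))"
        by (simp add: less_eq_complex_def)
      thus ?thesis by simp
    qed
    have "1 + (\<Sum>i=1..m. - c * Re (mtrace (X i))) \<le> 0"
    proof -
      have "(\<Sum>i=1..m. - c * Re (mtrace (X i))) \<le> (\<Sum>i=1..m. Re (\<Sum>j<d i. \<Sum>k<d i. M i j k * X i $$ (j, k)))"
        by (rule sum_mono) (use bnd in auto)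
      thus ?thesis using IF2 by (simp add: Re_sum)
    qed
    hence "c * (\<Sum>i=1..m. Re (mtrace (X i))) \<ge> 1" by (simp add: sum_distrib_left sum_negf)
    hence "(\<Sum>i=1..m. Re (mtrace (X i))) \<ge> 1 / c" using c_pos by (simp add: field_simps)
    thus "ereal (1 + 1 / c) \<le> ereal (1 + (\<Sum>i=1..m. Re (mtrace (X i))))" by simp
  qed
qed

end
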